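(* Let $k\ge 2$ be an integer and $D$ a strongly connected digraph with no directed cycle of length congruent to $1$ modulo $k$. Let $T$ be a DFS tree of $D$ rooted at $r$, of length $t$, with levels $V_0,\ldots,V_t$. For $s\in\{0,1,\ldots,k-1\}$ let $U_s=\bigcup_{0\le i\le t,\ i\equiv s \pmod k} V_i$. Then $U_0,\ldots,U_{k-1}$ form a partition of $V(D)$ into acyclic sets.
   Context: Digraphs are finite and loopless; paths and cycles are directed; $l(\cdot)$ denotes length. A DFS tree $T$ of a strongly connected digraph $D$ rooted at $r$ is the spanning out-branching produced by a depth-first search started at $r$. $P_u$ is the unique $ru$-path in $T$; the length $t$ of $T$ is the length of a longest path in $T$; the levels are $V_i=\{u: l(P_u)=i\}$, $0\le i\le t$. A set of vertices is acyclic if it induces no directed cycle. *)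

theory Defs
  imports Main
begin

definition digraph :: "'a set \<Rightarrow> ('a \<times> 'a) set \<Rightarrow> bool" where
  "digraph V E \<longleftrightarrow> finite V \<and> E \<subseteq> V \<times> V \<and> (\<forall>v. (v, v) \<notin> E)"

definition strongly_connected :: "'a set \<Rightarrow> ('a \<times> 'a) set \<Rightarrow> bool" where
  "strongly_connected V E \<longleftrightarrow> (\<forall>u\<in>V. \<forall>v\<in>V. (u, v) \<in> E\<^sup>*)"

text \<open>A directed cycle, given by its list of (distinct) vertices in cyclic order;
its length is the number of vertices (= number of arcs).\<close>

definition is_cycle :: "('a \<times> 'a) set \<Rightarrow> 'a list \<Rightarrow> bool" where
  "is_cycle E vs \<longleftrightarrow> vs \<noteq> [] \<and> distinct vs \<and>
     (\<forall>i < length vs. (vs ! i, vs ! ((i + 1) mod length vs)) \<in> E)"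

definition acyclic_set :: "('a \<times> 'a) set \<Rightarrow> 'a set \<Rightarrow> bool" where
  "acyclic_set E A \<longleftrightarrow> \<not> (\<exists>vs. is_cycle E vs \<and> set vs \<subseteq> A)"

text \<open>Execution of a depth-first search started at r: states are
(stack, visited vertices, tree arcs).\<close>

inductive dfs_state :: "('a \<times> 'a) set \<Rightarrow> 'a \<Rightarrow> 'a list \<Rightarrow> 'a set \<Rightarrow> ('a \<times> 'a) set \<Rightarrow> bool"
  for E r where
  init: "dfs_state E r [r] {r} {}"
| push: "dfs_state E r (u # s) vis T \<Longrightarrow> (u, v) \<in> E \<Longrightarrow> v \<notin> vis \<Longrightarrow>
         dfs_state E r (v # u # s) (insert v vis) (insert (u, v) T)"
| pop: "dfs_state E r (u # s) vis T \<Longrightarrow> (\<forall>v. (u, v) \<in> E \<longrightarrow> v \<in> vis) \<Longrightarrow>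
        dfs_state E r s vis T"

definition dfs_tree :: "'a set \<Rightarrow> ('a \<times> 'a) set \<Rightarrow> 'a \<Rightarrow> ('a \<times> 'a) set \<Rightarrow> bool" where
  "dfs_tree V E r T \<longleftrightarrow> r \<in> V \<and> dfs_state E r [] V T"

definition tree_depth :: "('a \<times> 'a) set \<Rightarrow> 'a \<Rightarrow> 'a \<Rightarrow> nat" where
  "tree_depth T r u = (LEAST n. (r, u) \<in> T ^^ n)"

text \<open>Length t of T: length of a longest path in T, i.e. the maximal depth.\<close>

definition tree_length :: "'a set \<Rightarrow> ('a \<times> 'a) set \<Rightarrow> 'a \<Rightarrow> nat" where
  "tree_length V T r = Max (tree_depth T r ` V)"

definition level :: "'a set \<Rightarrow> ('a \<times> 'a) set \<Rightarrow> 'a \<Rightarrow> nat \<Rightarrow> 'a set" where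
  "level V T r i = {u \<in> V. tree_depth T r u = i}"

definition level_class :: "'a set \<Rightarrow> ('a \<times> 'a) set \<Rightarrow> 'a \<Rightarrow> nat \<Rightarrow> nat \<Rightarrow> 'a set" where
  "level_class V T r k s =
     (\<Union>i \<in> {i. i \<le> tree_length V T r \<and> i mod k = s mod k}. level V T r i)"

end

theory Submission
  imports Defs
begin

definition dinv :: "('a \<times> 'a) set \<Rightarrow> 'a \<Rightarrow> 'a list \<Rightarrow> 'a set \<Rightarrow> ('a \<times> 'a) set \<Rightarrow> bool" where
"dinv E r s vis T \<longleftrightarrow> distinct s \<and> set s \<subseteq> vis \<and> r \<in> vis \<and> T \<subseteq> E \<and> T \<subseteq> vis \<times> vis
 \<and> (\<forall>v\<in>vis. (r,v) \<in> T\<^sup>*)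
 \<and> (\<forall>i j. i \<le> j \<longrightarrow> j < length s \<longrightarrow> (s!j, s!i) \<in> T\<^sup>*)
 \<and> (\<exists>d. d r = (0::nat) \<and> (\<forall>a b. (a,b) \<in> T \<longrightarrow> d b = Suc (d a)))
 \<and> (\<exists>f (n::nat). \<forall>u \<in> vis - set s. f u < n \<and>
      (\<forall>v. (u,v) \<in> E \<longrightarrow> v \<in> vis \<and> ((v,u) \<in> T\<^sup>* \<or> (v \<in> vis - set s \<and> f v < f u))))"

lemma dinvI:
  assumes "distinct s" "set s \<subseteq> vis" "r \<in> vis" "T \<subseteq> E" "T \<subseteq> vis \<times> vis"
   "\<forall>v\<in>vis. (r,v) \<in> T\<^sup>*"
   "\<forall>i j. i \<le> j \<longrightarrow> j < length s \<longrightarrow> (s!j, s!i) \<in> T\<^sup>*"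
   "\<exists>d. d r = (0::nat) \<and> (\<forall>a b. (a,b) \<in> T \<longrightarrow> d b = Suc (d a))"
   "\<exists>f (n::nat). \<forall>u \<in> vis - set s. f u < n \<and>
      (\<forall>v. (u,v) \<in> E \<longrightarrow> v \<in> vis \<and> ((v,u) \<in> T\<^sup>* \<or> (v \<in> vis - set s \<and> f v < f u)))"
  shows "dinv E r s vis T"
  using assms unfolding dinv_def by (intro conjI)

lemma stack_push:
  assumes H: "\<forall>i j. i \<le> j \<longrightarrow> j < length (u#s) \<longrightarrow> ((u#s)!j, (u#s)!i) \<in> T\<^sup>*"
  shows "\<forall>i j. i \<le> j \<longrightarrow> j < length (v#u#s) \<longrightarrow> ((v#u#s)!j, (v#u#s)!i) \<in> (insert (u,v) T)\<^sup>*"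
proof (intro allI impI)
  fix i j assume ij: "i \<le> j" "j < length (v#u#s)"
  have mono: "T\<^sup>* \<subseteq> (insert (u,v) T)\<^sup>*" by (rule rtrancl_mono) blast
  show "((v#u#s)!j, (v#u#s)!i) \<in> (insert (u,v) T)\<^sup>*"
  proof (cases i)
    case 0
    show ?thesis
    proof (cases j)
      case 0 then show ?thesis using \<open>i=0\<close> by simp
    next
      case (Suc j')
      have "((u#s)!j', (u#s)!0) \<in> T\<^sup>*" using H[rule_format, of 0 j'] ij Suc by auto
      then have "((u#s)!j', u) \<in> (insert (u,v) T)\<^sup>*" using mono by auto
      then have "((u#s)!j', v) \<in> (insert (u,v) T)\<^sup>*"
        by (rule rtrancl_into_rtrancl) simp
      then show ?thesis using 0 Suc by simp
    qed
  next
    case (Suc i')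
    then obtain j' where j': "j = Suc j'" using ij by (cases j) auto
    have "((u#s)!j', (u#s)!i') \<in> T\<^sup>*" using H ij Suc j' by auto
    then show ?thesis using mono Suc j' by auto
  qed
qed

lemma dinv_step: "dfs_state E r s vis T \<Longrightarrow> dinv E r s vis T"
proof (induction rule: dfs_state.induct)
  case init
  show ?case
    by (rule dinvI) (auto intro!: exI[of _ "\<lambda>_. 0"])
next
  case (push u s vis T v)
  let ?T = "insert (u,v) T"
  have mono: "T\<^sup>* \<subseteq> ?T\<^sup>*" by (rule rtrancl_mono) blast
  from push.IH have I: "distinct (u#s)" "set (u#s) \<subseteq> vis" "r \<in> vis" "T \<subseteq> E" "T \<subseteq> vis \<times> vis"
    "\<forall>w\<in>vis. (r,w) \<in> T\<^sup>*"
    "\<forall>i j. i \<le> j \<longrightarrow> j < length (u#s) \<longrightarrow> ((u#s)!j, (u#s)!i) \<in> T\<^sup>*"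
    unfolding dinv_def by blast+
  obtain d where d: "d r = (0::nat)" "\<forall>a b. (a,b) \<in> T \<longrightarrow> d b = Suc (d a)"
    using push.IH unfolding dinv_def by blast
  obtain f and n :: nat where f: "\<forall>w \<in> vis - set (u#s). f w < n \<and>
      (\<forall>x. (w,x) \<in> E \<longrightarrow> x \<in> vis \<and> ((x,w) \<in> T\<^sup>* \<or> (x \<in> vis - set (u#s) \<and> f x < f w)))"
    using push.IH unfolding dinv_def by blast
  have F: "insert v vis - set (v#u#s) = vis - set (u#s)" using push.hyps by auto
  have A1: "distinct (v#u#s)" using I push.hyps by auto
  have A2: "set (v#u#s) \<subseteq> insert v vis" using I by auto
  have A3: "?T \<subseteq> E" using I push.hyps by auto
  have A4: "?T \<subseteq> insert v vis \<times> insert v vis" using I by auto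
  have A5: "\<forall>w\<in>insert v vis. (r,w) \<in> ?T\<^sup>*"
  proof
    fix w assume "w \<in> insert v vis"
    then show "(r,w) \<in> ?T\<^sup>*"
    proof
      assume "w = v"
      have "(r,u) \<in> ?T\<^sup>*" using I mono by auto
      then show ?thesis using \<open>w=v\<close> by (metis rtrancl.rtrancl_into_rtrancl insertI1)
    next
      assume "w \<in> vis" then show ?thesis using I mono by auto
    qed
  qed
  note A6 = stack_push[OF I(7)]
  have vr: "v \<noteq> r" using I push.hyps by auto
  have A7: "\<exists>d. d r = (0::nat) \<and> (\<forall>a b. (a,b) \<in> ?T \<longrightarrow> d b = Suc (d a))"
  proof (intro exI[of _ "d(v := Suc (d u))"] conjI allI impI)
    show "(d(v := Suc (d u))) r = 0" using d vr by simp
    fix a b assume "(a,b) \<in> ?T"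
    then show "(d(v := Suc (d u))) b = Suc ((d(v := Suc (d u))) a)"
    proof
      assume "(a,b) = (u,v)" then show ?thesis using I push.hyps by auto
    next
      assume ab: "(a,b) \<in> T"
      then have "a \<in> vis" "b \<in> vis" using I by auto
      then show ?thesis using ab d push.hyps by auto
    qed
  qed
  have A8: "\<exists>f (n::nat). \<forall>w \<in> insert v vis - set (v#u#s). f w < n \<and>
      (\<forall>x. (w,x) \<in> E \<longrightarrow> x \<in> insert v vis \<and> ((x,w) \<in> ?T\<^sup>* \<or> (x \<in> insert v vis - set (v#u#s) \<and> f x < f w)))"
    unfolding F using f mono by blast
  show ?case by (rule dinvI[OF A1 A2 _ A3 A4 A5 A6 A7 A8]) (use I(3) in simp)
next
  case (pop u s vis T)
  have I1: "distinct (u#s)" using pop.IH unfolding dinv_def by (elim conjE) assumption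
  have I2: "set (u#s) \<subseteq> vis" using pop.IH unfolding dinv_def by (elim conjE) assumption
  have I3: "r \<in> vis" using pop.IH unfolding dinv_def by (elim conjE) assumption
  have I4: "T \<subseteq> E" using pop.IH unfolding dinv_def by (elim conjE) assumption
  have I5: "T \<subseteq> vis \<times> vis" using pop.IH unfolding dinv_def by (elim conjE) assumption
  have I6: "\<forall>w\<in>vis. (r,w) \<in> T\<^sup>*" using pop.IH unfolding dinv_def by (elim conjE) assumption
  have I7: "\<forall>i j. i \<le> j \<longrightarrow> j < length (u#s) \<longrightarrow> ((u#s)!j, (u#s)!i) \<in> T\<^sup>*" using pop.IH unfolding dinv_def by (elim conjE) assumption
  have I8: "\<exists>d. d r = (0::nat) \<and> (\<forall>a b. (a,b) \<in> T \<longrightarrow> d b = Suc (d a))" using pop.IH unfolding dinv_def by (elim conjE) assumption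
  note I = I1 I2 I3 I4 I5 I6 I7 I8
  obtain f and n :: nat where f: "\<forall>w \<in> vis - set (u#s). f w < n \<and>
      (\<forall>x. (w,x) \<in> E \<longrightarrow> x \<in> vis \<and> ((x,w) \<in> T\<^sup>* \<or> (x \<in> vis - set (u#s) \<and> f x < f w)))"
    using pop.IH unfolding dinv_def by blast
  have anc: "(x,u) \<in> T\<^sup>*" if xs: "x \<in> set (u#s)" for x
  proof -
    obtain j where j: "j < length (u#s)" "(u#s)!j = x" using in_set_conv_nth[THEN iffD1, OF xs] by blast
    have "((u#s)!j, (u#s)!0) \<in> T\<^sup>*" using I7 j(1) by blast
    then show ?thesis using j(2) by simp
  qed
  have B: "\<forall>w \<in> vis - set s. (f(u:=n)) w < Suc n \<and>
      (\<forall>x. (w,x) \<in> E \<longrightarrow> x \<in> vis \<and> ((x,w) \<in> T\<^sup>* \<or> (x \<in> vis - set s \<and> (f(u:=n)) x < (f(u:=n)) w)))"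
  proof
    fix w assume w: "w \<in> vis - set s"
    show "(f(u:=n)) w < Suc n \<and>
      (\<forall>x. (w,x) \<in> E \<longrightarrow> x \<in> vis \<and> ((x,w) \<in> T\<^sup>* \<or> (x \<in> vis - set s \<and> (f(u:=n)) x < (f(u:=n)) w)))"
    proof (cases "w = u")
      case True
      have "x \<in> vis \<and> ((x,w) \<in> T\<^sup>* \<or> (x \<in> vis - set s \<and> (f(u:=n)) x < (f(u:=n)) w))"
        if "(w,x) \<in> E" for x
      proof -
        have xv: "x \<in> vis" using pop.hyps(2) that True by blast
        show ?thesis
        proof (cases "x \<in> set (u#s)")
          case True then show ?thesis using anc[OF True] xv \<open>w=u\<close> by blast
        next
          case False
          have fx: "f x < n" using f xv False by blast
          have xu: "x \<noteq> u" using False by simp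
          show ?thesis using xv False \<open>w=u\<close> fx xu by simp
        qed
      qed
      then have H: "\<forall>x. (w,x) \<in> E \<longrightarrow> x \<in> vis \<and> ((x,w) \<in> T\<^sup>* \<or> (x \<in> vis - set s \<and> (f(u:=n)) x < (f(u:=n)) w))"
        by blast
      have "(f(u:=n)) w < Suc n" using True by simp
      then show ?thesis using H by blast
    next
      case False
      then have w': "w \<in> vis - set (u#s)" using w by simp
      show ?thesis
      proof (rule conjI)
        have "f w < n" using f w' by blast
        then show "(f(u:=n)) w < Suc n" using False by simp
      next
        show "\<forall>x. (w,x) \<in> E \<longrightarrow> x \<in> vis \<and> ((x,w) \<in> T\<^sup>* \<or> (x \<in> vis - set s \<and> (f(u:=n)) x < (f(u:=n)) w))"
        proof (intro allI impI)
        fix x assume "(w,x) \<in> E"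
        then have "x \<in> vis \<and> ((x,w) \<in> T\<^sup>* \<or> (x \<in> vis - set (u#s) \<and> f x < f w))"
          using f w' by blast
        then show "x \<in> vis \<and> ((x,w) \<in> T\<^sup>* \<or> (x \<in> vis - set s \<and> (f(u:=n)) x < (f(u:=n)) w))"
          using False by auto
        qed
      qed
    qed
  qed
  have S: "\<forall>i j. i \<le> j \<longrightarrow> j < length s \<longrightarrow> (s!j, s!i) \<in> T\<^sup>*"
  proof (intro allI impI)
    fix i j assume "i \<le> j" "j < length s"
    then show "(s!j, s!i) \<in> T\<^sup>*" using I(7)[rule_format, of "Suc i" "Suc j"] by simp
  qed
  have B': "\<exists>f (n::nat). \<forall>w \<in> vis - set s. f w < n \<and>
      (\<forall>x. (w,x) \<in> E \<longrightarrow> x \<in> vis \<and> ((x,w) \<in> T\<^sup>* \<or> (x \<in> vis - set s \<and> f x < f w)))"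
    using B by blast
  show ?case by (rule dinvI[OF _ _ I(3) I(4) I(5) I(6) S I(8) B']) (use I(1,2) in auto)
qed

lemma depth_add:
  assumes "\<forall>a b. (a,b) \<in> T \<longrightarrow> d b = Suc (d a)"
  shows "(x,y) \<in> T ^^ m \<Longrightarrow> d y = d x + (m::nat)"
proof (induction m arbitrary: y)
  case 0 then show ?case by simp
next
  case (Suc m)
  then obtain z where "(x,z) \<in> T ^^ m" "(z,y) \<in> T" by auto
  then show ?case using Suc assms by auto
qed

lemma tree_cycle:
  assumes d: "\<forall>a b. (a,b) \<in> T \<longrightarrow> d b = Suc (d a)"
    and TE: "T \<subseteq> E" and bk: "(x,y) \<in> E"
    and gh: "g 0 = y" "g m = x" "\<forall>i<m. (g i, g (Suc i)) \<in> T"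
  shows "is_cycle E (map g [0..<Suc m])"
proof -
  have dg: "d (g i) = d y + i" if "i \<le> m" for i
    using that
  proof (induction i)
    case 0 then show ?case using \<open>g 0 = y\<close> by simp
  next
    case (Suc i)
    then have "(g i, g (Suc i)) \<in> T" using \<open>\<forall>i<m. (g i, g (Suc i)) \<in> T\<close> by auto
    then show ?case using Suc d by auto
  qed
  have inj: "inj_on g {0..<Suc m}"
    by (rule inj_onI) (metis atLeastLessThan_iff dg add_left_cancel less_Suc_eq_le)
  have "distinct (map g [0..<Suc m])"
    using inj by (simp only: distinct_map distinct_upt set_upt)
  moreover have "\<forall>i < Suc m. (map g [0..<Suc m] ! i, map g [0..<Suc m] ! ((i + 1) mod Suc m)) \<in> E"
  proof (intro allI impI)
    fix i assume i: "i < Suc m"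
    show "(map g [0..<Suc m] ! i, map g [0..<Suc m] ! ((i + 1) mod Suc m)) \<in> E"
    proof (cases "i = m")
      case True
      then show ?thesis using bk gh by (simp del: upt_Suc)
    next
      case False
      then have "i < m" using i by auto
      then have "(i+1) mod Suc m = Suc i" by simp
      then show ?thesis using \<open>i < m\<close> gh TE
        by (simp del: upt_Suc add: nth_map_upt) (metis Suc_lessD add_0 less_SucI nth_map_upt nth_upt subsetD)
    qed
  qed
  ultimately show ?thesis unfolding is_cycle_def by (simp del: upt_Suc)
qed

lemma lc_iff: "x \<in> level_class V T r k s \<longleftrightarrow>
   x \<in> V \<and> tree_depth T r x \<le> tree_length V T r \<and> tree_depth T r x mod k = s mod k"
  unfolding level_class_def level_def by auto

lemma depth_eq:
  assumes d0: "d r = (0::nat)" and d: "\<forall>a b. (a,b) \<in> T \<longrightarrow> d b = Suc (d a)"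
    and ru: "(r,u) \<in> T\<^sup>*"
  shows "tree_depth T r u = d u"
proof -
  obtain n where n: "(r,u) \<in> T ^^ n" using ru rtrancl_power by blast
  have eq: "m = d u" if "(r,u) \<in> T ^^ m" for m
    using depth_add[OF d that] d0 by simp
  have "(r,u) \<in> T ^^ (d u)" using n eq[OF n] by simp
  then show ?thesis unfolding tree_depth_def
    by (rule Least_equality) (use eq in simp)
qed

theorem mainTheorem12:
  fixes V :: "'a set" and E :: "('a \<times> 'a) set" and r :: 'a
    and T :: "('a \<times> 'a) set" and k :: nat
  assumes "k \<ge> 2"
    and "digraph V E"
    and "strongly_connected V E"
    and "\<forall>vs. is_cycle E vs \<longrightarrow> length vs mod k \<noteq> 1"
    and "dfs_tree V E r T"
  shows "(\<Union>s<k. level_class V T r k s) = V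
       \<and> (\<forall>s<k. \<forall>s'<k. s \<noteq> s' \<longrightarrow> level_class V T r k s \<inter> level_class V T r k s' = {})
       \<and> (\<forall>s<k. acyclic_set E (level_class V T r k s))"
proof -
  have k2: "k \<ge> 2" using assms(1) .
  have fin: "finite V" and EV: "E \<subseteq> V \<times> V" and loop: "\<forall>v. (v,v) \<notin> E"
    using assms(2) unfolding digraph_def by auto
  have rV: "r \<in> V" and st: "dfs_state E r [] V T" using assms(5) unfolding dfs_tree_def by auto
  have inv: "dinv E r [] V T" by (rule dinv_step[OF st])
  have TE: "T \<subseteq> E" using inv unfolding dinv_def by (elim conjE) assumption
  have reach: "\<forall>v\<in>V. (r,v) \<in> T\<^sup>*" using inv unfolding dinv_def by (elim conjE) assumption
  have "\<exists>d. d r = (0::nat) \<and> (\<forall>a b. (a,b) \<in> T \<longrightarrow> d b = Suc (d a))"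
    using inv unfolding dinv_def by (elim conjE) assumption
  then obtain d where d0: "d r = (0::nat)" and d: "\<forall>a b. (a,b) \<in> T \<longrightarrow> d b = Suc (d a)" by blast
  have "\<exists>f (n::nat). \<forall>u \<in> V - set []. f u < n \<and>
      (\<forall>v. (u,v) \<in> E \<longrightarrow> v \<in> V \<and> ((v,u) \<in> T\<^sup>* \<or> (v \<in> V - set [] \<and> f v < f u)))"
    using inv unfolding dinv_def by (elim conjE) assumption
  then obtain f :: "'a \<Rightarrow> nat" and n :: nat where f: "\<forall>u \<in> V. f u < n \<and>
      (\<forall>v. (u,v) \<in> E \<longrightarrow> v \<in> V \<and> ((v,u) \<in> T\<^sup>* \<or> (v \<in> V \<and> f v < f u)))"
    by auto
  have depth: "tree_depth T r u = d u" if "u \<in> V" for u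
    using depth_eq[OF d0 d] reach that by blast
  have le: "tree_depth T r u \<le> tree_length V T r" if "u \<in> V" for u
    unfolding tree_length_def using fin that by simp
  have P1: "(\<Union>s<k. level_class V T r k s) = V"
  proof
    show "(\<Union>s<k. level_class V T r k s) \<subseteq> V" by (auto simp: lc_iff)
    show "V \<subseteq> (\<Union>s<k. level_class V T r k s)"
    proof
      fix u assume u: "u \<in> V"
      have "u \<in> level_class V T r k (tree_depth T r u mod k)"
        using u le[OF u] by (simp add: lc_iff)
      moreover have "tree_depth T r u mod k < k" using k2 by simp
      ultimately show "u \<in> (\<Union>s<k. level_class V T r k s)" by blast
    qed
  qed
  have P2: "\<forall>s<k. \<forall>s'<k. s \<noteq> s' \<longrightarrow> level_class V T r k s \<inter> level_class V T r k s' = {}"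
    by (auto simp: lc_iff)
  have P3: "acyclic_set E (level_class V T r k s)" if "s < k" for s
    unfolding acyclic_set_def
  proof
    assume "\<exists>vs. is_cycle E vs \<and> set vs \<subseteq> level_class V T r k s"
    then obtain vs where cyc: "is_cycle E vs" and sub: "set vs \<subseteq> level_class V T r k s" by blast
    let ?L = "length vs"
    have ne: "vs \<noteq> []" and arcs: "\<forall>i < ?L. (vs ! i, vs ! ((i + 1) mod ?L)) \<in> E"
      using cyc unfolding is_cycle_def by auto
    have Lpos: "?L > 0" using ne by simp
    have "\<exists>i < ?L. (vs ! ((i + 1) mod ?L), vs ! i) \<in> T\<^sup>*"
    proof (rule ccontr)
      assume nb: "\<not> (\<exists>i < ?L. (vs ! ((i + 1) mod ?L), vs ! i) \<in> T\<^sup>*)"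
      have dec: "f (vs ! ((i + 1) mod ?L)) < f (vs ! i)" if "i < ?L" for i
      proof -
        have e: "(vs ! i, vs ! ((i + 1) mod ?L)) \<in> E" using arcs that by blast
        then have "vs ! i \<in> V" using EV by blast
        then show ?thesis using f e nb that by blast
      qed
      have finv: "finite (f ` set vs)" by simp
      have "f ` set vs \<noteq> {}" using ne by simp
      then have "Min (f ` set vs) \<in> f ` set vs" using finv Min_in by blast
      then obtain x where x: "x \<in> set vs" "f x = Min (f ` set vs)" by auto
      then obtain i where i: "i < ?L" "vs ! i = x" by (auto simp: in_set_conv_nth)
      have "vs ! ((i + 1) mod ?L) \<in> set vs" using Lpos by simp
      then have "Min (f ` set vs) \<le> f (vs ! ((i + 1) mod ?L))" using finv by simp
      then show False using dec[OF i(1)] i(2) x(2) by simp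
    qed
    then obtain i where i: "i < ?L" and back_: "(vs ! ((i + 1) mod ?L), vs ! i) \<in> T\<^sup>*" by blast
    define a where "a = vs ! i"
    define b where "b = vs ! ((i + 1) mod ?L)"
    have ab: "(a,b) \<in> E" using arcs i unfolding a_def b_def by blast
    have ba: "(b,a) \<in> T\<^sup>*" using back_ unfolding a_def b_def .
    have aU: "a \<in> level_class V T r k s" using sub i unfolding a_def by auto
    have bU: "b \<in> level_class V T r k s" using sub Lpos unfolding b_def by auto
    have aV: "a \<in> V" and bV: "b \<in> V" using aU bU by (auto simp: lc_iff)
    have modeq: "d a mod k = d b mod k" using aU bU depth[OF aV] depth[OF bV] by (simp add: lc_iff)
    have anb: "a \<noteq> b" using ab loop by blast
    obtain m where m: "(b,a) \<in> T ^^ m" using ba rtrancl_power by blast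
    have da: "d a = d b + m" using depth_add[OF d m] .
    have m0: "m \<noteq> 0" using m anb by (cases m) auto
    have "(d b + m) mod k = d b mod k" using modeq da by simp
    then have kdvd: "k dvd m"
      by (metis add_diff_cancel_left' le_add1 mod_eq_dvd_iff_nat)
    then obtain j where mj: "m = k * j" by blast
    have len1: "Suc m mod k = 1" using k2 mj by (simp add: Suc_mod_eq_add3_mod mod_Suc)
    obtain g where g: "g 0 = b" "g m = a" "\<forall>i<m. (g i, g (Suc i)) \<in> T"
      using m unfolding relpow_fun_conv by blast
    have "is_cycle E (map g [0..<Suc m])"
      by (rule tree_cycle[OF d TE ab g])
    moreover have "length (map g [0..<Suc m]) mod k = 1" using len1 by simp
    ultimately show False using assms(4) by blast
  qed
  show ?thesis using P1 P2 P3 by blast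
qed

end
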